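(* Let $p=2$, $a\in\mathbb{C}_2$, $a\ne0$, $A=|a|_2$, $f(x)=\frac{ax}{x^2+a}$, and $t_1=\sqrt{-2a}$, $t_2=-\sqrt{-2a}$. Then for every $0<r\le\frac{\sqrt A}{2\sqrt2}$, $$f(S_r(t_1)\setminus\mathcal P_2)\subseteq S_r(t_2),\qquad f(S_r(t_2)\setminus\mathcal P_2)\subseteq S_r(t_1).$$
   Context: $S_r(t)=\{x\in\mathbb{C}_2:|x-t|_2=r\}$. $f$ is defined on $\mathbb{C}_p\setminus\{\pm\sqrt{-a}\}$ and $f\circ f$ on $\mathbb{C}_p$ minus the points $\pm\sqrt{-a}$ and $\pm\sqrt{\frac{(-3\pm\sqrt5)a}{2}}$. $\mathcal P_2=\{x\in\mathbb{C}_p:\exists n\in\mathbb{N},\ f^n(x)\in\{\pm\sqrt{-a},\ \pm\sqrt{(-3\pm\sqrt5)a/2}\}\}$. The points $t_1,t_2$ form a $2$-cycle of $f$. *)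

theory Defs
  imports Complex_Main "HOL-Computational_Algebra.Polynomial"
begin

text \<open>C_2 is not in the library. We model it abstractly: a field of characteristic 0
 with a non-archimedean absolute value, complete, algebraically closed, normalised by |2| = 1/2.\<close>

definition nonarch_abs :: "('a::field \<Rightarrow> real) \<Rightarrow> bool" where
  "nonarch_abs v \<longleftrightarrow>
     (\<forall>x. 0 \<le> v x) \<and> (\<forall>x. v x = 0 \<longleftrightarrow> x = 0) \<and>
     (\<forall>x y. v (x * y) = v x * v y) \<and> (\<forall>x y. v (x + y) \<le> max (v x) (v y))"

definition abs_complete :: "('a::field \<Rightarrow> real) \<Rightarrow> bool" where
  "abs_complete v \<longleftrightarrow>
     (\<forall>X :: nat \<Rightarrow> 'a. (\<forall>e>0. \<exists>N. \<forall>m\<ge>N. \<forall>n\<ge>N. v (X m - X n) < e) \<longrightarrow>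
        (\<exists>L. \<forall>e>0. \<exists>N. \<forall>n\<ge>N. v (X n - L) < e))"

definition alg_closed :: "'a::field itself \<Rightarrow> bool" where
  "alg_closed _ \<longleftrightarrow> (\<forall>p :: 'a poly. 1 \<le> degree p \<longrightarrow> (\<exists>x. poly p x = 0))"

definition C2_like :: "('a::field_char_0 \<Rightarrow> real) \<Rightarrow> bool" where
  "C2_like v \<longleftrightarrow> nonarch_abs v \<and> abs_complete v \<and> alg_closed TYPE('a) \<and> v 2 = 1/2"

definition sphere_v :: "('a::field \<Rightarrow> real) \<Rightarrow> real \<Rightarrow> 'a \<Rightarrow> 'a set" where
  "sphere_v v r t = {x. v (x - t) = r}"

text \<open>The map f(x) = a x / (x^2 + a) (total in HOL; value 0 at the poles, which are
 excluded anyway via P_2).\<close>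
definition fmap :: "'a::field \<Rightarrow> 'a \<Rightarrow> 'a" where
  "fmap a x = a * x / (x^2 + a)"

text \<open>Poles of f and of f\<circ>f: \<plusminus>sqrt(-a) and \<plusminus>sqrt((-3 \<plusminus> sqrt 5) a / 2).\<close>
definition poles2 :: "'a::field \<Rightarrow> 'a set" where
  "poles2 a = {y. y^2 = - a \<or> (\<exists>s. s^2 = 5 \<and> y^2 = (-3 + s) * a / 2)}"

definition P2 :: "'a::field \<Rightarrow> 'a set" where
  "P2 a = {x. \<exists>n::nat. (fmap a ^^ n) x \<in> poles2 a}"

end

theory Submission
  imports Defs
begin

lemma na_basic:
  assumes "nonarch_abs v"
  shows "v 1 = 1" "\<And>x. v (-x) = v x" "\<And>x y. v y < v x \<Longrightarrow> v (x + y) = v x"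
    "\<And>x y. v (x*y) = v x * v y" "\<And>x. 0 \<le> v x" "\<And>x. v x = 0 \<longleftrightarrow> x = 0"
    "\<And>x y. v (x + y) \<le> max (v x) (v y)"
proof -
  have m: "\<And>x y. v (x*y) = v x * v y" and z: "\<And>x. v x = 0 \<longleftrightarrow> x = 0"
    and p: "\<And>x. 0 \<le> v x" and t: "\<And>x y. v (x + y) \<le> max (v x) (v y)"
    using assms unfolding nonarch_abs_def by auto
  show "\<And>x y. v (x*y) = v x * v y" "\<And>x. 0 \<le> v x" "\<And>x. v x = 0 \<longleftrightarrow> x = 0"
    "\<And>x y. v (x + y) \<le> max (v x) (v y)" using m z p t by auto
  have "v 1 = v 1 * v 1" using m[of 1 1] by simp
  moreover have "v 1 \<noteq> 0" using z[of 1] by simp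
  ultimately show v1: "v 1 = 1" by simp
  have "v (-1) * v (-1) = 1" using m[of "-1" "-1"] v1 by simp
  hence vm1: "v (-1) = 1" using p[of "-1"]
    by (metis abs_of_nonneg abs_power2 power2_eq_square power_one real_sqrt_abs real_sqrt_one)
  show neg: "\<And>x. v (-x) = v x" using m vm1 by (metis mult_minus1 mult_1)
  show "\<And>x y. v y < v x \<Longrightarrow> v (x + y) = v x"
  proof -
    fix x y assume lt: "v y < v x"
    have a1: "v (x+y) \<le> v x" using t[of x y] lt by simp
    have "v x \<le> max (v (x+y)) (v (-y))" using t[of "x+y" "-y"] by simp
    hence "v x \<le> v (x+y)" using lt neg[of y] by (auto simp: max_def split: if_splits)
    thus "v (x + y) = v x" using a1 by simp
  qed
qed

lemma numl: "t^2 = -2*(a::'a::field_char_0) \<Longrightarrow> a*(t+h) + t*((t+h)^2+a) = h*(-3*a + t*h)"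
proof -
  assume "t^2 = -2*a"
  hence z: "t*t + 2*a = 0" by (simp add: power2_eq_square)
  have "a*(t+h) + t*((t+h)^2+a) = h*(-3*a + t*h) + t*(t*t+2*a) + 2*h*(t*t+2*a)"
    by (simp add: power2_eq_square algebra_simps)
  thus ?thesis using z by simp
qed

lemma key:
  fixes v :: "'a::field_char_0 \<Rightarrow> real"
  assumes na: "nonarch_abs v" and v2: "v 2 = 1/2" and a0: "a \<noteq> 0"
    and tt: "t^2 = -2*a" and r0: "r > 0" and rr: "r^2 \<le> v a / 8"
    and hx: "v (x - t) = r"
  shows "v (fmap a x - (-t)) = r"
proof -
  note B = na_basic[OF na]
  define h where "h = x - t"
  define A where "A = v a"
  have A0: "A > 0" using B(5)[of a] B(6)[of a] a0 unfolding A_def by linarith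
  define s where "s = v t"
  have s0: "s \<ge> 0" unfolding s_def using B(5) .
  have "s^2 = v (t^2)" unfolding s_def power2_eq_square using B(4) by simp
  also have "\<dots> = v (-2*a)" using tt by simp
  also have "\<dots> = A/2" unfolding A_def using B(2)[of "2*a"] B(4)[of 2 a] v2 by simp
  finally have s2: "s^2 = A/2" .
  have vh: "v h = r" using hx h_def by simp
  have "(s*r)^2 \<le> A^2/16" using s2 rr unfolding A_def[symmetric]
  proof -
    have "(s*r)^2 = A/2 * r^2" using s2 by (simp add: power_mult_distrib)
    also have "\<dots> \<le> A/2 * (A/8)" using rr A0 unfolding A_def[symmetric] by (intro mult_left_mono) auto
    finally show ?thesis by (simp add: power2_eq_square)
  qed
  moreover have "A^2/16 < A^2" using A0 by simp
  ultimately have "(s*r)^2 < A^2" by linarith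
  hence sr: "s*r < A" by (rule power_less_imp_less_base) (use A0 in simp)
  have v3: "v 3 = 1"
  proof -
    have "v (1 + 2) = v 1" using B(3)[of 2 1] B(1) v2 by simp
    thus ?thesis using B(1) by simp
  qed
  have x: "x = t + h" using h_def by simp
  have den: "x^2 + a = -a + (2*t*h + h^2)" using tt unfolding x by (simp add: power2_eq_square algebra_simps)
  have num: "a*x + t*(x^2+a) = h*(-3*a + t*h)"
    using tt unfolding x by (rule numl)
  have v2th: "v (2*t*h) = s*r/2" using B(4) v2 vh unfolding s_def by simp
  have vhh: "v (h^2) = r^2" using B(4) vh by (simp add: power2_eq_square)
  have "s*r/2 < A" using sr A0 s0 r0 by simp
  moreover have "r^2 < A" using rr A0 unfolding A_def by simp
  ultimately have "v (2*t*h + h^2) < A" using B(7)[of "2*t*h" "h^2"] v2th vhh by simp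
  hence vden: "v (x^2 + a) = A" unfolding den using B(3)[of "2*t*h + h^2" "-a"] B(2) A_def by simp
  hence dn0: "x^2 + a \<noteq> 0" using A0 B(6)[of "x^2+a"] by linarith
  have "v (t*h) < v (-3*a)" using B(4) B(2)[of "3*a"] v3 sr vh unfolding s_def A_def by simp
  moreover have "v (-3*a) = A" using B(2)[of "3*a"] B(4)[of 3 a] v3 A_def by simp
  ultimately have "v (-3*a + t*h) = A" using B(3)[of "t*h" "-3*a"] by simp
  hence vnum: "v (a*x + t*(x^2+a)) = r*A" using num B(4) vh by simp
  have "fmap a x - (-t) = (a*x + t*(x^2+a)) / (x^2+a)"
    unfolding fmap_def using dn0 by (simp add: field_simps)
  also have "v \<dots> = r"
  proof -
    have "v ((a*x + t*(x^2+a)) / (x^2+a) * (x^2+a)) = v (a*x + t*(x^2+a))" using dn0 by simp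
    hence "v ((a*x + t*(x^2+a)) / (x^2+a)) * A = r * A" using B(4) vden vnum by metis
    thus ?thesis using A0 by simp
  qed
  finally show ?thesis .
qed

theorem theorem4p2:
  fixes v :: "'a::field_char_0 \<Rightarrow> real" and a t1 t2 :: 'a and r :: real
  assumes "C2_like v"
    and "a \<noteq> 0"
    and "t1^2 = -2 * a" and "t2 = - t1"
    and "0 < r" and "r \<le> sqrt (v a) / (2 * sqrt 2)"
  shows "fmap a ` (sphere_v v r t1 - P2 a) \<subseteq> sphere_v v r t2
       \<and> fmap a ` (sphere_v v r t2 - P2 a) \<subseteq> sphere_v v r t1"
proof -
  have na: "nonarch_abs v" and v2: "v 2 = 1/2" using assms(1) unfolding C2_like_def by auto
  have va: "v a \<ge> 0" using na unfolding nonarch_abs_def by auto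
  have "r^2 \<le> (sqrt (v a) / (2 * sqrt 2))^2" using assms(5,6) by (simp add: power_mono)
  also have "\<dots> = v a / 8" using va by (simp add: power_divide power_mult_distrib)
  finally have rr: "r^2 \<le> v a / 8" .
  have t2sq: "t2^2 = -2*a" using assms(3,4) by simp
  show ?thesis
  proof
    show "fmap a ` (sphere_v v r t1 - P2 a) \<subseteq> sphere_v v r t2"
      using key[OF na v2 assms(2) assms(3) assms(5) rr] assms(4)
      unfolding sphere_v_def by auto
    show "fmap a ` (sphere_v v r t2 - P2 a) \<subseteq> sphere_v v r t1"
      using key[OF na v2 assms(2) t2sq assms(5) rr] assms(4)
      unfolding sphere_v_def by auto
  qed
qed

end
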